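(* Let $d\ge 1$ and $c\ge 1$, let $\mathcal C$ be a finite collection of $c$-fat objects in $\mathbb R^d$, and let $G$ be the intersection graph of $\mathcal C$. Let $t\ge 0$ be an integer and let $\mathcal C^t$ be a collection of nonempty subsets of $\mathcal C$ such that for each $\mathcal X\in\mathcal C^t$ the induced subgraph $G_{\mathcal X}$ of $G$ on $\mathcal X$ is connected and has diameter at most $t$. Identify each $\mathcal X\in\mathcal C^t$ with the object $\bigcup_{O\in\mathcal X}O\subseteq\mathbb R^d$. Then $\mathcal C^t$ is a collection of $c'$-fat objects in $\mathbb R^d$ with $c'\le C_d\cdot c\cdot (t+1)^{2d}$, where $C_d$ is a constant depending only on $d$.
   Context: An object is a bounded subset of $\mathbb R^d$. The size of an object is the side length of its smallest enclosing axis-parallel hypercube; a box of size $r$ is an axis-parallel hypercube of side length $r$. A collection $\mathcal C$ of objects in $\mathbb R^d$ is $c$-fat (for $c\ge 1$) if for every $r\ge 0$ and every box $B$ of size $r$ there is a set of at most $c$ points of $\mathbb R^d$ such that every object of $\mathcal C$ of size at least $r$ that intersects $B$ contains at least one of these points. The intersection graph of $\mathcal C$ has vertex set $\mathcal C$, two objects being adjacent iff they intersect. *)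

theory Defs
  imports "HOL-Analysis.Analysis"
begin

text \<open>Size of a (bounded, nonempty) object: side length of its smallest enclosing
  axis-parallel hypercube, i.e. the maximal coordinate extent.\<close>
definition obj_size :: "'a::euclidean_space set \<Rightarrow> real" where
  "obj_size S = Max ((\<lambda>i. Sup ((\<lambda>x. x \<bullet> i) ` S) - Inf ((\<lambda>x. x \<bullet> i) ` S)) ` Basis)"

definition hcube :: "'a::euclidean_space \<Rightarrow> real \<Rightarrow> 'a set" where
  "hcube a r = cbox a (a + r *\<^sub>R One)"

definition fat :: "real \<Rightarrow> 'a::euclidean_space set set \<Rightarrow> bool" where
  "fat c \<C> \<longleftrightarrow> (\<forall>r\<ge>0. \<forall>a. \<exists>P. finite P \<and> real (card P) \<le> c \<and>
      (\<forall>S\<in>\<C>. obj_size S \<ge> r \<and> S \<inter> hcube a r \<noteq> {} \<longrightarrow> S \<inter> P \<noteq> {}))"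

definition ig_walk :: "'a set set \<Rightarrow> 'a set \<Rightarrow> 'a set \<Rightarrow> nat \<Rightarrow> bool" where
  "ig_walk X u v k \<longleftrightarrow> (\<exists>ps. length ps = Suc k \<and> hd ps = u \<and> last ps = v \<and> set ps \<subseteq> X \<and>
      (\<forall>i<k. ps ! i \<noteq> ps ! Suc i \<and> ps ! i \<inter> ps ! Suc i \<noteq> {}))"

definition conn_diam_le :: "'a set set \<Rightarrow> nat \<Rightarrow> bool" where
  "conn_diam_le X t \<longleftrightarrow> (\<forall>u\<in>X. \<forall>v\<in>X. \<exists>k\<le>t. ig_walk X u v k)"

end

theory Submission
  imports Defs
begin

lemma size_diff:
  fixes S :: "'a::euclidean_space set"
  assumes "bounded S" "x \<in> S" "y \<in> S" "i \<in> Basis"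
  shows "x \<bullet> i - y \<bullet> i \<le> obj_size S"
proof -
  have b: "bounded ((\<lambda>x. x \<bullet> i) ` S)"
    using assms(1) by (rule bounded_linear_image) (rule bounded_linear_inner_left)
  have "x \<bullet> i \<le> Sup ((\<lambda>x. x \<bullet> i) ` S)"
    using b assms by (intro cSup_upper) (auto intro: bounded_imp_bdd_above)
  moreover have "Inf ((\<lambda>x. x \<bullet> i) ` S) \<le> y \<bullet> i"
    using b assms by (intro cInf_lower) (auto intro: bounded_imp_bdd_below)
  moreover have "Sup ((\<lambda>x. x \<bullet> i) ` S) - Inf ((\<lambda>x. x \<bullet> i) ` S) \<le> obj_size S"
    unfolding obj_size_def using assms(4) by (intro Max_ge) auto
  ultimately show ?thesis by linarith
qed

lemma size_le:
  fixes S :: "'a::euclidean_space set"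
  assumes "S \<noteq> {}" "\<And>x y i. x \<in> S \<Longrightarrow> y \<in> S \<Longrightarrow> i \<in> Basis \<Longrightarrow> x \<bullet> i - y \<bullet> i \<le> K"
  shows "obj_size S \<le> K"
  unfolding obj_size_def
proof (subst Max_le_iff, simp, simp, intro ballI, clarify)
  fix i :: 'a assume i: "i \<in> Basis"
  have "\<forall>x\<in>S. x \<bullet> i - K \<le> Inf ((\<lambda>x. x \<bullet> i) ` S)"
  proof
    fix x assume x: "x \<in> S"
    show "x \<bullet> i - K \<le> Inf ((\<lambda>x. x \<bullet> i) ` S)"
      using assms(1) by (rule cInf_greatest[of "(\<lambda>x. x \<bullet> i) ` S", simplified]) (use assms(2)[OF x _ i] in force)
  qed
  then have "Sup ((\<lambda>x. x \<bullet> i) ` S) \<le> Inf ((\<lambda>x. x \<bullet> i) ` S) + K"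
    using assms(1) by (auto intro!: cSup_least simp: algebra_simps)
  then show "Sup ((\<lambda>x. x \<bullet> i) ` S) - Inf ((\<lambda>x. x \<bullet> i) ` S) \<le> K" by simp
qed

lemma expand:
  fixes S :: "'a::euclidean_space set"
  assumes "bounded S" "p \<in> S" "p \<in> cbox l u" "obj_size S \<le> s"
  shows "S \<subseteq> cbox (l - s *\<^sub>R One) (u + s *\<^sub>R One)"
proof
  fix z assume z: "z \<in> S"
  show "z \<in> cbox (l - s *\<^sub>R One) (u + s *\<^sub>R One)"
    unfolding mem_box
  proof (intro ballI conjI)
    fix i :: 'a assume i: "i \<in> Basis"
    have 1: "z \<bullet> i - p \<bullet> i \<le> s" "p \<bullet> i - z \<bullet> i \<le> s"
      using size_diff[OF assms(1) z assms(2) i] size_diff[OF assms(1) assms(2) z i] assms(4) by auto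
    have 2: "l \<bullet> i \<le> p \<bullet> i" "p \<bullet> i \<le> u \<bullet> i" using assms(3) i by (auto simp: mem_box)
    show "(l - s *\<^sub>R One) \<bullet> i \<le> z \<bullet> i" "z \<bullet> i \<le> (u + s *\<^sub>R One) \<bullet> i"
      using 1 2 i by (auto simp: inner_diff_left inner_add_left)
  qed
qed

lemma walk_nth:
  assumes "ig_walk X u v k"
  obtains ps where "length ps = Suc k" "ps ! 0 = u" "ps ! k = v" "\<And>m. m \<le> k \<Longrightarrow> ps ! m \<in> X"
    "\<And>m. m < k \<Longrightarrow> ps ! m \<inter> ps ! Suc m \<noteq> {}"
proof -
  obtain ps where ps: "length ps = Suc k" "hd ps = u" "last ps = v" "set ps \<subseteq> X"
      "\<forall>i<k. ps ! i \<noteq> ps ! Suc i \<and> ps ! i \<inter> ps ! Suc i \<noteq> {}"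
    using assms unfolding ig_walk_def by blast
  have "ps \<noteq> []" using ps(1) by auto
  then have "ps ! 0 = u" "ps ! k = v" using ps by (auto simp: hd_conv_nth last_conv_nth)
  moreover have "\<And>m. m \<le> k \<Longrightarrow> ps ! m \<in> X" using ps(1,4) by (metis le_imp_less_Suc nth_mem subsetD)
  ultimately show ?thesis using that ps by blast
qed

lemma walk_diff:
  fixes X :: "'a::euclidean_space set set"
  assumes "ig_walk X u v k" "\<And>Q. Q \<in> X \<Longrightarrow> bounded Q" "\<And>Q. Q \<in> X \<Longrightarrow> Q \<noteq> {} \<Longrightarrow> obj_size Q \<le> M"
    "x \<in> u" "z \<in> v" "i \<in> Basis"
  shows "x \<bullet> i - z \<bullet> i \<le> real (Suc k) * M"
proof -
  obtain ps where ps: "length ps = Suc k" "ps ! 0 = u" "ps ! k = v" "\<And>m. m \<le> k \<Longrightarrow> ps ! m \<in> X"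
    "\<And>m. m < k \<Longrightarrow> ps ! m \<inter> ps ! Suc m \<noteq> {}"
    using walk_nth[OF assms(1)] by blast
  have "\<forall>z\<in>ps ! m. x \<bullet> i - z \<bullet> i \<le> real (Suc m) * M" if "m \<le> k" for m
    using that
  proof (induction m)
    case 0
    have "u \<in> X" using ps(4)[of 0] ps(2) by simp
    show ?case
    proof
      fix z assume z: "z \<in> ps ! 0"
      have "x \<bullet> i - z \<bullet> i \<le> obj_size u"
        using size_diff[OF assms(2)[OF \<open>u \<in> X\<close>] assms(4) _ assms(6), of z] z ps(2) by simp
      then show "x \<bullet> i - z \<bullet> i \<le> real (Suc 0) * M" using assms(3)[OF \<open>u \<in> X\<close>] assms(4) by force
    qed
  next
    case (Suc m)
    obtain w where w: "w \<in> ps ! m" "w \<in> ps ! Suc m" using ps(5)[of m] Suc.prems by (metis Suc_le_lessD disjoint_iff)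
    have h1: "x \<bullet> i - w \<bullet> i \<le> real (Suc m) * M" using Suc w by auto
    have X: "ps ! Suc m \<in> X" using ps(4) Suc.prems by blast
    show ?case
    proof
      fix z assume z: "z \<in> ps ! Suc m"
      have "w \<bullet> i - z \<bullet> i \<le> M"
        using size_diff[OF assms(2)[OF X] w(2) z assms(6)] assms(3)[OF X] w(2) by force
      then show "x \<bullet> i - z \<bullet> i \<le> real (Suc (Suc m)) * M" using h1 by (simp add: algebra_simps)
    qed
  qed
  then show ?thesis using ps(3) assms(5) by auto
qed

lemma union_size:
  fixes X :: "'a::euclidean_space set set"
  assumes "conn_diam_le X t" "\<And>Q. Q \<in> X \<Longrightarrow> bounded Q" "\<And>Q. Q \<in> X \<Longrightarrow> Q \<noteq> {} \<Longrightarrow> obj_size Q \<le> M"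
    "0 \<le> M" "\<Union>X \<noteq> {}"
  shows "obj_size (\<Union>X) \<le> real (Suc t) * M"
proof (rule size_le[OF assms(5)])
  fix x y i assume "x \<in> \<Union>X" "y \<in> \<Union>X" "i \<in> (Basis::'a set)"
  then obtain u v where uv: "u \<in> X" "v \<in> X" "x \<in> u" "y \<in> v" "i \<in> Basis" by blast
  obtain k where "k \<le> t" "ig_walk X u v k" using assms(1) uv unfolding conn_diam_le_def by blast
  then have "x \<bullet> i - y \<bullet> i \<le> real (Suc k) * M" using walk_diff assms(2,3) uv by blast
  also have "\<dots> \<le> real (Suc t) * M" using \<open>k \<le> t\<close> assms(4) by (intro mult_right_mono) auto
  finally show "x \<bullet> i - y \<bullet> i \<le> real (Suc t) * M" .
qed

lemma walk_claim:
  fixes X :: "'a::euclidean_space set set"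
  assumes "ig_walk X u v k" "\<And>Q. Q \<in> X \<Longrightarrow> bounded Q" "u \<inter> cbox a (a + r *\<^sub>R One) \<noteq> {}"
    "obj_size v \<ge> s"
  shows "\<exists>Q\<in>X. \<exists>j\<le>k. obj_size Q \<ge> s \<and>
     Q \<inter> cbox (a - (real j * s) *\<^sub>R One) (a + (r + real j * s) *\<^sub>R One) \<noteq> {}"
proof -
  define B where "B j = cbox (a - (real j * s) *\<^sub>R One) (a + (r + real j * s) *\<^sub>R One)" for j
  obtain ps where ps: "length ps = Suc k" "ps ! 0 = u" "ps ! k = v" "\<And>m. m \<le> k \<Longrightarrow> ps ! m \<in> X"
    "\<And>m. m < k \<Longrightarrow> ps ! m \<inter> ps ! Suc m \<noteq> {}"
    using walk_nth[OF assms(1)] by blast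
  have "ps ! m \<inter> B m \<noteq> {} \<or> (\<exists>m'<m. obj_size (ps ! m') \<ge> s \<and> ps ! m' \<inter> B m' \<noteq> {})"
    if "m \<le> k" for m
    using that
  proof (induction m)
    case 0
    then show ?case using assms(3) ps(2) by (simp add: B_def)
  next
    case (Suc m)
    have IH: "ps ! m \<inter> B m \<noteq> {} \<or> (\<exists>m'<m. obj_size (ps ! m') \<ge> s \<and> ps ! m' \<inter> B m' \<noteq> {})"
      using Suc by simp
    show ?case
    proof (cases "\<exists>m'<m. obj_size (ps ! m') \<ge> s \<and> ps ! m' \<inter> B m' \<noteq> {}")
      case True
      then show ?thesis using less_SucI by blast
    next
      case False
      then have int: "ps ! m \<inter> B m \<noteq> {}" using IH by blast
      show ?thesis
      proof (cases "obj_size (ps ! m) \<ge> s")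
        case True
        then show ?thesis using int by blast
      next
        case False
        obtain p where p: "p \<in> ps ! m" "p \<in> B m" using int by blast
        have "ps ! m \<subseteq> cbox ((a - (real m * s) *\<^sub>R One) - s *\<^sub>R One) ((a + (r + real m * s) *\<^sub>R One) + s *\<^sub>R One)"
          using expand[OF assms(2)[OF ps(4)] p(1) p(2)[unfolded B_def], of s] False Suc.prems by simp
        also have "\<dots> = B (Suc m)" unfolding B_def by (simp add: algebra_simps)
        finally have "ps ! m \<subseteq> B (Suc m)" .
        moreover have "ps ! m \<inter> ps ! Suc m \<noteq> {}" using ps(5) Suc.prems by simp
        ultimately show ?thesis by blast
      qed
    qed
  qed
  from this[of k] show ?thesis
    using ps(3,4) assms(4) unfolding B_def[symmetric] by (meson less_imp_le order.refl order.trans)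
qed

lemma grid_coord:
  fixes q :: real and N :: nat
  assumes "0 \<le> q" "q \<le> real N" "N > 0"
  shows "real (min (nat \<lfloor>q\<rfloor>) (N - 1)) \<le> q \<and> q \<le> real (min (nat \<lfloor>q\<rfloor>) (N - 1)) + 1"
proof (cases "nat \<lfloor>q\<rfloor> \<le> N - 1")
  case True
  then have "min (nat \<lfloor>q\<rfloor>) (N - 1) = nat \<lfloor>q\<rfloor>" by simp
  moreover have "real (nat \<lfloor>q\<rfloor>) = of_int \<lfloor>q\<rfloor>" using assms(1) by simp
  ultimately show ?thesis by (simp add: of_int_floor_le)
next
  case False
  then have "real (nat \<lfloor>q\<rfloor>) \<ge> real N" by simp
  moreover have "real (nat \<lfloor>q\<rfloor>) = of_int \<lfloor>q\<rfloor>" using assms(1) by simp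
  ultimately have "q \<ge> real N" using of_int_floor_le[of q] by linarith
  then have "q = real N" using assms by simp
  then show ?thesis using False assms(3) by (simp add: of_nat_diff)
qed

lemma grid_cover:
  fixes l w :: "'a::euclidean_space"
  assumes "s > 0" "w \<in> cbox l (l + (real N * s) *\<^sub>R One)" "N > 0"
  shows "\<exists>v \<in> PiE Basis (\<lambda>_. {..<N}). w \<in> hcube (l + (\<Sum>i\<in>Basis. (s * real (v i)) *\<^sub>R i)) s"
proof -
  define v where "v = restrict (\<lambda>i. min (nat \<lfloor>(w \<bullet> i - l \<bullet> i) / s\<rfloor>) (N - 1)) Basis"
  have "v \<in> PiE Basis (\<lambda>_. {..<N})" unfolding v_def using assms(3) by auto
  moreover have "w \<in> hcube (l + (\<Sum>i\<in>Basis. (s * real (v i)) *\<^sub>R i)) s"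
    unfolding hcube_def mem_box
  proof (intro ballI conjI)
    fix i :: 'a assume i: "i \<in> Basis"
    have sum: "(\<Sum>j\<in>Basis. (s * real (v j)) *\<^sub>R j) \<bullet> i = s * real (v i)"
      using i by (simp add: inner_sum_left inner_Basis if_distrib cong: if_cong)
    define q where "q = (w \<bullet> i - l \<bullet> i) / s"
    have w: "l \<bullet> i \<le> w \<bullet> i" "w \<bullet> i \<le> l \<bullet> i + real N * s"
      using assms(2) i by (auto simp: mem_box inner_add_left)
    have q: "0 \<le> q" "q \<le> real N" using w assms(1) by (auto simp: q_def field_simps)
    have vi: "v i = min (nat \<lfloor>q\<rfloor>) (N - 1)" using i by (simp add: v_def q_def)
    have g: "real (v i) \<le> q" "q \<le> real (v i) + 1" using grid_coord[OF q assms(3)] vi by auto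
    have wq: "w \<bullet> i = l \<bullet> i + s * q" using assms(1) by (simp add: q_def)
    have "s * real (v i) \<le> s * q" "s * q \<le> s * real (v i) + s"
      using mult_left_mono[OF g(1), of s] mult_left_mono[OF g(2), of s] assms(1)
      by (simp_all add: distrib_left)
    then show "(l + (\<Sum>i\<in>Basis. (s * real (v i)) *\<^sub>R i)) \<bullet> i \<le> w \<bullet> i"
      "w \<bullet> i \<le> (l + (\<Sum>i\<in>Basis. (s * real (v i)) *\<^sub>R i) + s *\<^sub>R One) \<bullet> i"
      using sum wq i by (auto simp: inner_add_left)
  qed
  ultimately show ?thesis by blast
qed

lemma box_mono:
  fixes a :: "'a::euclidean_space"
  assumes "j \<le> t" "0 \<le> s"
  shows "cbox (a - (real j * s) *\<^sub>R One) (a + (r + real j * s) *\<^sub>R One)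
         \<subseteq> cbox (a - (real t * s) *\<^sub>R One) (a + (r + real t * s) *\<^sub>R One)"
proof -
  have "real j * s \<le> real t * s" using assms by (intro mult_right_mono) auto
  show ?thesis
  proof
    fix x assume x: "x \<in> cbox (a - (real j * s) *\<^sub>R One) (a + (r + real j * s) *\<^sub>R One)"
    show "x \<in> cbox (a - (real t * s) *\<^sub>R One) (a + (r + real t * s) *\<^sub>R One)"
      unfolding mem_box
    proof (intro ballI conjI)
      fix i :: 'a assume i: "i \<in> Basis"
      have "a \<bullet> i - real j * s \<le> x \<bullet> i" "x \<bullet> i \<le> a \<bullet> i + (r + real j * s)"
        using x i by (auto simp: mem_box inner_add_left inner_diff_left)
      then show "(a - (real t * s) *\<^sub>R One) \<bullet> i \<le> x \<bullet> i"
        "x \<bullet> i \<le> (a + (r + real t * s) *\<^sub>R One) \<bullet> i"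
        using i \<open>real j * s \<le> real t * s\<close> by (auto simp: inner_add_left inner_diff_left)
    qed
  qed
qed

lemma card_bound:
  fixes c :: real and t d :: nat
  assumes "c \<ge> 1"
  shows "real (3 * t + 1) ^ d * c \<le> 3 ^ d * c * (real t + 1) ^ (2 * d)"
proof -
  have "real (3 * t + 1) ^ d \<le> (3 * (real t + 1)) ^ d" by (intro power_mono) auto
  also have "\<dots> = 3 ^ d * (real t + 1) ^ d" by (rule power_mult_distrib)
  also have "\<dots> \<le> 3 ^ d * (real t + 1) ^ (2 * d)" by (intro mult_left_mono power_increasing) auto
  finally show ?thesis using assms by (simp add: mult_right_mono mult.commute mult.left_commute)
qed

theorem lemma3p2:
  "\<exists>Cd::real. \<forall>(c::real) (\<C>::'a::euclidean_space set set) (t::nat) (\<C>t::'a set set set).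
     c \<ge> 1 \<longrightarrow> finite \<C> \<longrightarrow> (\<forall>S\<in>\<C>. bounded S) \<longrightarrow> fat c \<C> \<longrightarrow>
     (\<forall>X\<in>\<C>t. X \<noteq> {} \<and> X \<subseteq> \<C> \<and> conn_diam_le X t) \<longrightarrow>
     fat (Cd * c * (real t + 1) ^ (2 * DIM('a))) (Union ` \<C>t)"
proof (intro exI[of _ "3 ^ DIM('a)"] allI impI)
  fix c :: real and \<C> :: "'a set set" and t :: nat and \<C>t :: "'a set set set"
  assume c: "c \<ge> 1" and fin: "finite \<C>" and bnd: "\<forall>S\<in>\<C>. bounded S" and fat: "fat c \<C>"
    and Ct: "\<forall>X\<in>\<C>t. X \<noteq> {} \<and> X \<subseteq> \<C> \<and> conn_diam_le X t"
  let ?K = "3 ^ DIM('a) * c * (real t + 1) ^ (2 * DIM('a))"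
  have K1: "1 \<le> ?K"
    using card_bound[OF c, of t "DIM('a)"] c
    by (smt (verit) one_le_power of_nat_0_le_iff mult_le_cancel_right1 of_nat_1 le_add2 of_nat_mono)
  show "fat ?K (Union ` \<C>t)"
    unfolding fat_def
  proof (intro allI impI)
    fix r :: real and a :: 'a
    assume r: "r \<ge> 0"
    show "\<exists>P. finite P \<and> real (card P) \<le> ?K \<and>
        (\<forall>S\<in>Union ` \<C>t. r \<le> obj_size S \<and> S \<inter> hcube a r \<noteq> {} \<longrightarrow> S \<inter> P \<noteq> {})"
    proof (cases "r = 0")
      case True
      have "hcube a r = {a}" using True by (simp add: hcube_def)
      then show ?thesis using K1 by (intro exI[of _ "{a}"]) auto
    next
      case False
      then have rpos: "r > 0" using r by simp
      define s where "s = r / (real t + 1)"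
      have spos: "s > 0" using rpos by (simp add: s_def)
      have rs: "r = (real t + 1) * s" by (simp add: s_def)
      define N where "N = 3 * t + 1"
      define l where "l = a - (real t * s) *\<^sub>R One"
      define corner where "corner v = l + (\<Sum>i\<in>Basis. (s * real (v i)) *\<^sub>R i)" for v :: "'a \<Rightarrow> nat"
      define V where "V = PiE (Basis::'a set) (\<lambda>_. {..<N})"
      have "\<forall>v. \<exists>P. finite P \<and> real (card P) \<le> c \<and>
          (\<forall>S\<in>\<C>. s \<le> obj_size S \<and> S \<inter> hcube (corner v) s \<noteq> {} \<longrightarrow> S \<inter> P \<noteq> {})"
        using fat spos unfolding fat_def by auto
      then obtain Pf where Pf: "\<And>v. finite (Pf v)" "\<And>v. real (card (Pf v)) \<le> c"
        "\<And>v S. S \<in> \<C> \<Longrightarrow> s \<le> obj_size S \<Longrightarrow> S \<inter> hcube (corner v) s \<noteq> {} \<Longrightarrow> S \<inter> Pf v \<noteq> {}"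
        by metis
      define P where "P = \<Union> (Pf ` V)"
      have finV: "finite V" unfolding V_def by (intro finite_PiE) auto
      have cardV: "card V = N ^ DIM('a)" unfolding V_def by (simp add: card_PiE)
      have "finite P" unfolding P_def using finV Pf(1) by auto
      moreover have "real (card P) \<le> ?K"
      proof -
        have "card P \<le> (\<Sum>v\<in>V. card (Pf v))" unfolding P_def by (rule card_UN_le[OF finV])
        then have "real (card P) \<le> (\<Sum>v\<in>V. real (card (Pf v)))"
          by (metis of_nat_le_iff of_nat_sum)
        also have "\<dots> \<le> (\<Sum>v\<in>V. c)" by (rule sum_mono) (use Pf(2) in blast)
        also have "\<dots> = real (N ^ DIM('a)) * c" using cardV by simp
        also have "\<dots> \<le> ?K" using card_bound[OF c, of t "DIM('a)"] by (simp add: N_def)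
        finally show ?thesis .
      qed
      moreover have "\<forall>S\<in>Union ` \<C>t. r \<le> obj_size S \<and> S \<inter> hcube a r \<noteq> {} \<longrightarrow> S \<inter> P \<noteq> {}"
      proof (intro ballI impI, elim conjE)
        fix S assume "S \<in> Union ` \<C>t" and Sr: "r \<le> obj_size S" and Sh: "S \<inter> hcube a r \<noteq> {}"
        then obtain X where X: "X \<in> \<C>t" "S = \<Union>X" by blast
        have XC: "X \<subseteq> \<C>" and cd: "conn_diam_le X t" using Ct X by auto
        have bX: "\<And>Q. Q \<in> X \<Longrightarrow> bounded Q" using XC bnd by auto
        obtain u where u: "u \<in> X" "u \<inter> hcube a r \<noteq> {}" using Sh X by blast
        define Y where "Y = {Q \<in> X. Q \<noteq> {}}"
        have finY: "finite Y" using fin XC unfolding Y_def by (rule_tac rev_finite_subset[of \<C>]) auto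
        have uY: "u \<in> Y" using u unfolding Y_def by auto
        define M where "M = Max (obj_size ` Y)"
        have MY: "obj_size Q \<le> M" if "Q \<in> X" "Q \<noteq> {}" for Q
        proof -
          have "Q \<in> Y" using that Y_def by auto
          then show ?thesis unfolding M_def using finY by simp
        qed
        have M0: "0 \<le> M"
        proof -
          obtain x where "x \<in> u" using u by blast
          obtain i :: 'a where "i \<in> Basis" using nonempty_Basis by blast
          have "0 \<le> obj_size u" using size_diff[OF bX[OF u(1)] \<open>x \<in> u\<close> \<open>x \<in> u\<close> \<open>i \<in> Basis\<close>] by simp
          moreover have "obj_size u \<le> M" using MY[OF u(1)] \<open>x \<in> u\<close> by blast
          ultimately show ?thesis by linarith
        qed
        have "M \<ge> s"
        proof (rule ccontr)
          assume "\<not> M \<ge> s"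
          have "obj_size (\<Union>X) \<le> real (Suc t) * M"
            using union_size[OF cd bX MY M0] Sh X by auto
          also have "\<dots> < (real t + 1) * s" 
          proof -
            have "real (Suc t) = real t + 1" by simp
            moreover have "(real t + 1) * M < (real t + 1) * s"
              using \<open>\<not> M \<ge> s\<close> by (intro mult_strict_left_mono) auto
            ultimately show ?thesis by (simp only:)
          qed
          finally show False using Sr X rs by simp
        qed
        obtain v where v: "v \<in> Y" "obj_size v = M"
        proof -
          have "M \<in> obj_size ` Y" unfolding M_def using finY uY by (intro Max_in) auto
          then show ?thesis using that by auto
        qed
        obtain k where k: "k \<le> t" "ig_walk X u v k"
          using cd u(1) v(1) unfolding conn_diam_le_def Y_def by blast
        obtain Q j where Q: "Q \<in> X" "j \<le> k" "s \<le> obj_size Q"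
          "Q \<inter> cbox (a - (real j * s) *\<^sub>R One) (a + (r + real j * s) *\<^sub>R One) \<noteq> {}"
          using walk_claim[OF k(2) bX u(2)[unfolded hcube_def], of s] v \<open>M \<ge> s\<close> by auto
        have "Q \<inter> cbox (a - (real t * s) *\<^sub>R One) (a + (r + real t * s) *\<^sub>R One) \<noteq> {}"
          using Q(4) box_mono[of j t s a r] Q(2) k(1) spos by auto
        moreover have "a + (r + real t * s) *\<^sub>R One = l + (real N * s) *\<^sub>R One"
        proof -
          have e: "r + real t * s = real N * s - real t * s" by (simp add: N_def rs algebra_simps)
          show ?thesis by (simp only: l_def e scaleR_diff_left) (simp add: algebra_simps)
        qed
        ultimately obtain w where w: "w \<in> Q" "w \<in> cbox l (l + (real N * s) *\<^sub>R One)"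
          unfolding l_def by auto
        obtain vv where vv: "vv \<in> V" "w \<in> hcube (corner vv) s"
          using grid_cover[OF spos w(2)] unfolding V_def corner_def N_def by auto
        have "Q \<inter> Pf vv \<noteq> {}" using Pf(3)[of Q vv] Q XC w vv by blast
        then show "S \<inter> P \<noteq> {}" using X Q(1) vv(1) unfolding P_def by blast
      qed
      ultimately show ?thesis by blast
    qed
  qed
qed

end
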